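(* Let $G_1,G_2,G_3\in\mathrm{SL}_2(\mathbb C)$ and let $(H_1,H_2,H_3)$ be the image of $(G_1,G_2,G_3)$ under the braid $b=\sigma_1\sigma_2^{-1}\sigma_1\sigma_2^{-1}\sigma_1\in B_3$, where the generators act on triples by $\sigma_1:(G_1,G_2,G_3)\mapsto (G_2,G_2^{-1}G_1G_2,G_3)$, $\sigma_1^{-1}:(G_1,G_2,G_3)\mapsto(G_1G_2G_1^{-1},G_1,G_3)$, $\sigma_2:(G_1,G_2,G_3)\mapsto(G_1,G_3,G_3^{-1}G_2G_3)$, $\sigma_2^{-1}:(G_1,G_2,G_3)\mapsto(G_1,G_2G_3G_2^{-1},G_2)$ (so in particular $H_1H_2H_3=G_1G_2G_3$). Suppose $A\in\mathrm{SL}_2(\mathbb C)$ satisfies $H_1=AG_3^{-1}A^{-1}$, $H_2=AG_2^{-1}A^{-1}$, $H_3=AG_1^{-1}A^{-1}$. If $G_1G_2G_3\neq\pm I$, then $A^2=-I$. *)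

theory Defs
  imports "HOL-Analysis.Analysis"
begin

type_synonym mat2 = "complex^2^2"

definition SL2 :: "mat2 set" where
  "SL2 = {M. det M = 1}"

definition sig1 :: "mat2 \<times> mat2 \<times> mat2 \<Rightarrow> mat2 \<times> mat2 \<times> mat2" where
  "sig1 = (\<lambda>(G1, G2, G3). (G2, matrix_inv G2 ** G1 ** G2, G3))"

definition sig1_inv :: "mat2 \<times> mat2 \<times> mat2 \<Rightarrow> mat2 \<times> mat2 \<times> mat2" where
  "sig1_inv = (\<lambda>(G1, G2, G3). (G1 ** G2 ** matrix_inv G1, G1, G3))"

definition sig2 :: "mat2 \<times> mat2 \<times> mat2 \<Rightarrow> mat2 \<times> mat2 \<times> mat2" where
  "sig2 = (\<lambda>(G1, G2, G3). (G1, G3, matrix_inv G3 ** G2 ** G3))"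

definition sig2_inv :: "mat2 \<times> mat2 \<times> mat2 \<Rightarrow> mat2 \<times> mat2 \<times> mat2" where
  "sig2_inv = (\<lambda>(G1, G2, G3). (G1, G2 ** G3 ** matrix_inv G2, G2))"

text \<open>The braid b = sigma1 sigma2^-1 sigma1 sigma2^-1 sigma1 (a palindromic word,
  so the order of application convention is irrelevant).\<close>

definition braid_b :: "mat2 \<times> mat2 \<times> mat2 \<Rightarrow> mat2 \<times> mat2 \<times> mat2" where
  "braid_b = sig1 \<circ> sig2_inv \<circ> sig1 \<circ> sig2_inv \<circ> sig1"

end

theory Submission
  imports Defs
begin

definition adj2 :: "mat2 \<Rightarrow> mat2" where
  "adj2 M = (\<chi> i j. if i = 1 \<and> j = 1 then M$2$2 else if i = 1 \<and> j = 2 then - M$1$2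
     else if i = 2 \<and> j = 1 then - M$2$1 else M$1$1)"

lemma adj2_nth[simp]: "adj2 M $1$1 = M$2$2" "adj2 M $1$2 = - M$1$2"
   "adj2 M $2$1 = - M$2$1" "adj2 M $2$2 = M$1$1"
  by (simp_all add: adj2_def)

lemma mult2_nth[simp]: "((A::mat2) ** B) $ i $ j = A$i$1 * B$1$j + A$i$2 * B$2$j"
  by (simp add: matrix_matrix_mult_def sum_2)

lemma mat2_eq: "(A::mat2) = B \<longleftrightarrow> A$1$1 = B$1$1 \<and> A$1$2 = B$1$2 \<and> A$2$1 = B$2$1 \<and> A$2$2 = B$2$2"
  by (auto simp: vec_eq_iff forall_2)

lemma mat1_nth[simp]: "(mat 1 :: mat2)$1$1 = 1" "(mat 1 :: mat2)$1$2 = 0"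
  "(mat 1 :: mat2)$2$1 = 0" "(mat 1 :: mat2)$2$2 = 1"
  by (simp_all add: mat_def)

lemma adj2_right: "det M = 1 \<Longrightarrow> M ** adj2 M = mat 1"
  by (simp add: mat2_eq det_2 algebra_simps)

lemma adj2_left: "det M = 1 \<Longrightarrow> adj2 M ** M = mat 1"
  by (simp add: mat2_eq det_2 algebra_simps)

lemma inv_adj2: assumes "det M = 1" shows "matrix_inv M = adj2 M"
proof -
  have "\<exists>A'. M ** A' = mat 1 \<and> A' ** M = mat 1"
    using adj2_right[OF assms] adj2_left[OF assms] by blast
  then have h: "M ** matrix_inv M = mat 1 \<and> matrix_inv M ** M = mat 1"
    unfolding matrix_inv_def by (rule someI_ex)
  have "matrix_inv M = matrix_inv M ** (M ** adj2 M)"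
    using adj2_right[OF assms] by simp
  also have "\<dots> = adj2 M" using h by (simp add: matrix_mul_assoc)
  finally show ?thesis .
qed

lemma det_adj2: "det (adj2 M) = det M"
  by (simp add: det_2 algebra_simps)

lemma det_mul2: "det M = 1 \<Longrightarrow> det N = 1 \<Longrightarrow> det ((M::mat2) ** N) = 1"
  by (simp add: det_mul)

lemma adj2_mul: "adj2 ((M::mat2) ** N) = adj2 N ** adj2 M"
  by (simp add: mat2_eq algebra_simps)

definition good :: "mat2 \<times> mat2 \<times> mat2 \<Rightarrow> bool" where
  "good t = (case t of (a,b,c) \<Rightarrow> det a = 1 \<and> det b = 1 \<and> det c = 1)"

definition prd :: "mat2 \<times> mat2 \<times> mat2 \<Rightarrow> mat2" where
  "prd t = (case t of (a,b,c) \<Rightarrow> a ** b ** c)"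

lemma sig1_good: "good t \<Longrightarrow> good (sig1 t) \<and> prd (sig1 t) = prd t"
proof -
  assume g: "good t"
  obtain a b c where t: "t = (a,b,c)" by (cases t) auto
  have d: "det a = 1" "det b = 1" "det c = 1" using g t by (auto simp: good_def)
  have "b ** (adj2 b ** a ** b) ** c = (b ** adj2 b) ** a ** b ** c"
    by (simp add: matrix_mul_assoc)
  then show ?thesis using d
    by (simp add: t sig1_def good_def prd_def inv_adj2 det_mul2 det_adj2 adj2_right matrix_mul_assoc)
qed

lemma sig2_inv_good: "good t \<Longrightarrow> good (sig2_inv t) \<and> prd (sig2_inv t) = prd t"
proof -
  assume g: "good t"
  obtain a b c where t: "t = (a,b,c)" by (cases t) auto
  have d: "det a = 1" "det b = 1" "det c = 1" using g t by (auto simp: good_def)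
  have "a ** (b ** c ** adj2 b) ** b = a ** b ** c ** (adj2 b ** b)"
    by (simp add: matrix_mul_assoc)
  then show ?thesis using d
    by (simp add: t sig2_inv_def good_def prd_def inv_adj2 det_mul2 det_adj2 adj2_left matrix_mul_assoc)
qed

lemma braid_prd: "good t \<Longrightarrow> prd (braid_b t) = prd t"
  unfolding braid_b_def using sig1_good sig2_inv_good by simp

lemma core:
  fixes A P :: mat2
  assumes "det A = 1" "det P = 1" "P ** A = A ** adj2 P"
    and "P \<noteq> mat 1" "P \<noteq> - mat 1"
  shows "A ** A = - mat 1"
proof -
  define a b c d where "a = A$1$1" "b = A$1$2" "c = A$2$1" "d = A$2$2"
  define p q r u where "p = P$1$1" "q = P$1$2" "r = P$2$1" "u = P$2$2"
  have dA: "a*d - b*c = 1" and dP: "p*u - q*r = 1"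
    using assms(1,2) by (simp_all add: det_2 a_b_c_d_def p_q_r_u_def)
  have e: "p*a + q*c = a*u - b*r" "p*b + q*d = - a*q + b*p"
     "r*a + u*c = c*u - d*r" "r*b + u*d = - c*q + d*p"
    using assms(3) unfolding mat2_eq by (simp_all add: a_b_c_d_def p_q_r_u_def)
  define t where "t = a*p + b*r + c*q + d*u"
  have k1: "t * p = a + d" using e dA dP unfolding t_def by algebra
  have k2: "t * u = a + d" using e dA dP unfolding t_def by algebra
  have k3: "t * q = 0" using e dA dP unfolding t_def by algebra
  have k4: "t * r = 0" using e dA dP unfolding t_def by algebra
  have tr0: "a + d = 0"
  proof (rule ccontr)
    assume n: "a + d \<noteq> 0"
    then have tn: "t \<noteq> 0" using k1 by auto
    then have "q = 0" "r = 0" using k3 k4 by auto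
    have "p = u" using k1 k2 tn by (metis mult_left_cancel)
    have "p*p = 1" using dP \<open>q = 0\<close> \<open>r = 0\<close> \<open>p = u\<close> by simp
    then have "p = 1 \<or> p = -1" by (metis square_eq_1_iff power2_eq_square)
    then show False using assms(4,5) \<open>q = 0\<close> \<open>r = 0\<close> \<open>p = u\<close>
      by (auto simp: mat2_eq p_q_r_u_def)
  qed
  show ?thesis using tr0 dA unfolding mat2_eq
    by (simp add: a_b_c_d_def algebra_simps power2_eq_square) algebra
qed

theorem lemma3p2:
  fixes G1 G2 G3 H1 H2 H3 A :: mat2
  assumes "G1 \<in> SL2" and "G2 \<in> SL2" and "G3 \<in> SL2" and "A \<in> SL2"
    and "braid_b (G1, G2, G3) = (H1, H2, H3)"
    and "H1 = A ** matrix_inv G3 ** matrix_inv A"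
    and "H2 = A ** matrix_inv G2 ** matrix_inv A"
    and "H3 = A ** matrix_inv G1 ** matrix_inv A"
    and "G1 ** G2 ** G3 \<noteq> mat 1" and "G1 ** G2 ** G3 \<noteq> - mat 1"
  shows "A ** A = - mat 1"
proof -
  define P where "P = G1 ** G2 ** G3"
  have d: "det G1 = 1" "det G2 = 1" "det G3 = 1" "det A = 1" using assms(1-4) by (auto simp: SL2_def)
  have dP: "det P = 1" using d by (simp add: P_def det_mul2)
  have "P = prd (H1, H2, H3)"
    using braid_prd[of "(G1,G2,G3)"] assms(5) d by (simp add: good_def prd_def P_def)
  also have "\<dots> = A ** adj2 P ** adj2 A"
  proof -
    have "prd (H1, H2, H3) = A ** adj2 G3 ** (adj2 A ** A) ** adj2 G2 ** (adj2 A ** A) ** adj2 G1 ** adj2 A"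
      using assms(6-8) d by (simp add: prd_def inv_adj2 matrix_mul_assoc)
    also have "\<dots> = A ** adj2 P ** adj2 A"
      using d by (simp add: adj2_left P_def adj2_mul matrix_mul_assoc)
    finally show ?thesis .
  qed
  finally have "P ** A = A ** adj2 P ** (adj2 A ** A)" by (metis matrix_mul_assoc)
  then have "P ** A = A ** adj2 P" using d by (simp add: adj2_left)
  then show ?thesis using core d dP assms(9,10) P_def by blast
qed

end
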